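(* Let $\mathbb{K}=(G,M,I)$ be a finite formal context and let $S\subseteq\mathfrak{B}(\mathbb{K})$ be a set of formal concepts. Then $I_S=\bigcup_{(A,B)\in\mathfrak{B}(\mathbb{K})\setminus S}A\times B$, $G_S=\bigcup_{(A,B)\in\mathfrak{B}(\mathbb{K})\setminus S}A$, and $M_S=\bigcup_{(A,B)\in\mathfrak{B}(\mathbb{K})\setminus S}B$.
   Context: A formal context $(G,M,I)$ consists of sets $G$ (objects), $M$ (attributes) and $I\subseteq G\times M$. For $A\subseteq G$ let $A'=\{m\in M\mid (g,m)\in I\ \forall g\in A\}$ and for $B\subseteq M$ let $B'=\{g\in G\mid (g,m)\in I\ \forall m\in B\}$. A formal concept is a pair $(A,B)$ with $A'=B$, $B'=A$; $\mathfrak{B}(\mathbb{K})$ is the set of all formal concepts. For $S\subseteq\mathfrak{B}(\mathbb{K})$ the $S$-removed incidences, objects and attributes are $I_S=I\setminus\big(\bigcup_{(A,B)\in S}A\times B\setminus\bigcup_{(A,B)\in\mathfrak{B}(\mathbb{K})\setminus S}A\times B\big)$, $G_S=G\setminus\big(\bigcup_{(A,B)\in S}A\setminus\bigcup_{(A,B)\in\mathfrak{B}(\mathbb{K})\setminus S}A\big)$, $M_S=M\setminus\big(\bigcup_{(A,B)\in S}B\setminus\bigcup_{(A,B)\in\mathfrak{B}(\mathbb{K})\setminus S}B\big)$. *)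

theory Defs
  imports Main
begin

definition formal_context :: "'g set \<Rightarrow> 'm set \<Rightarrow> ('g \<times> 'm) set \<Rightarrow> bool" where
  "formal_context G M I \<longleftrightarrow> I \<subseteq> G \<times> M"

definition obj_deriv :: "'m set \<Rightarrow> ('g \<times> 'm) set \<Rightarrow> 'g set \<Rightarrow> 'm set" where
  "obj_deriv M I A = {m \<in> M. \<forall>g\<in>A. (g, m) \<in> I}"

definition attr_deriv :: "'g set \<Rightarrow> ('g \<times> 'm) set \<Rightarrow> 'm set \<Rightarrow> 'g set" where
  "attr_deriv G I B = {g \<in> G. \<forall>m\<in>B. (g, m) \<in> I}"

definition concepts :: "'g set \<Rightarrow> 'm set \<Rightarrow> ('g \<times> 'm) set \<Rightarrow> ('g set \<times> 'm set) set" where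
  "concepts G M I = {(A, B). A \<subseteq> G \<and> B \<subseteq> M \<and> obj_deriv M I A = B \<and> attr_deriv G I B = A}"

definition removed_incidences ::
  "'g set \<Rightarrow> 'm set \<Rightarrow> ('g \<times> 'm) set \<Rightarrow> ('g set \<times> 'm set) set \<Rightarrow> ('g \<times> 'm) set" where
  "removed_incidences G M I S =
     I - ((\<Union>(A, B)\<in>S. A \<times> B) - (\<Union>(A, B)\<in>concepts G M I - S. A \<times> B))"

definition removed_objects ::
  "'g set \<Rightarrow> 'm set \<Rightarrow> ('g \<times> 'm) set \<Rightarrow> ('g set \<times> 'm set) set \<Rightarrow> 'g set" where
  "removed_objects G M I S =
     G - ((\<Union>(A, B)\<in>S. A) - (\<Union>(A, B)\<in>concepts G M I - S. A))"

definition removed_attributes ::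
  "'g set \<Rightarrow> 'm set \<Rightarrow> ('g \<times> 'm) set \<Rightarrow> ('g set \<times> 'm set) set \<Rightarrow> 'm set" where
  "removed_attributes G M I S =
     M - ((\<Union>(A, B)\<in>S. B) - (\<Union>(A, B)\<in>concepts G M I - S. B))"

end

theory Submission
  imports Defs
begin

lemma conc_D:
  assumes "(A, B) \<in> concepts G M I"
  shows "A \<subseteq> G" "B \<subseteq> M" "A = attr_deriv G I B"
  using assms unfolding concepts_def by auto

lemma conc_sub: assumes "(A, B) \<in> concepts G M I" shows "A \<times> B \<subseteq> I"
proof
  fix p assume "p \<in> A \<times> B"
  then obtain g m where p: "p = (g, m)" "g \<in> A" "m \<in> B" by blast
  have "g \<in> attr_deriv G I B" using p(2) conc_D(3)[OF assms] by simp
  then show "p \<in> I" using p unfolding attr_deriv_def by simp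
qed

lemma obj_in: "g \<in> G \<Longrightarrow> g \<in> attr_deriv G I (obj_deriv M I {g})"
  unfolding attr_deriv_def obj_deriv_def by simp

lemma attr_in: "m \<in> M \<Longrightarrow> m \<in> obj_deriv M I (attr_deriv G I {m})"
  unfolding attr_deriv_def obj_deriv_def by simp

lemma obj_conc:
  assumes "g \<in> G"
  shows "(attr_deriv G I (obj_deriv M I {g}), obj_deriv M I {g}) \<in> concepts G M I"
proof -
  have h: "g \<in> attr_deriv G I (obj_deriv M I {g})" by (rule obj_in[OF assms])
  have "obj_deriv M I (attr_deriv G I (obj_deriv M I {g})) = obj_deriv M I {g}"
  proof
    show "obj_deriv M I (attr_deriv G I (obj_deriv M I {g})) \<subseteq> obj_deriv M I {g}"
      using h unfolding obj_deriv_def by blast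
    show "obj_deriv M I {g} \<subseteq> obj_deriv M I (attr_deriv G I (obj_deriv M I {g}))"
      unfolding obj_deriv_def attr_deriv_def by blast
  qed
  moreover have "attr_deriv G I (obj_deriv M I {g}) \<subseteq> G" unfolding attr_deriv_def by blast
  moreover have "obj_deriv M I {g} \<subseteq> M" unfolding obj_deriv_def by blast
  ultimately show ?thesis unfolding concepts_def by simp
qed

lemma attr_conc:
  assumes "m \<in> M"
  shows "(attr_deriv G I {m}, obj_deriv M I (attr_deriv G I {m})) \<in> concepts G M I"
proof -
  have h: "m \<in> obj_deriv M I (attr_deriv G I {m})" by (rule attr_in[OF assms])
  have "attr_deriv G I (obj_deriv M I (attr_deriv G I {m})) = attr_deriv G I {m}"
  proof
    show "attr_deriv G I (obj_deriv M I (attr_deriv G I {m})) \<subseteq> attr_deriv G I {m}"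
      using h unfolding attr_deriv_def by blast
    show "attr_deriv G I {m} \<subseteq> attr_deriv G I (obj_deriv M I (attr_deriv G I {m}))"
      unfolding obj_deriv_def attr_deriv_def by blast
  qed
  moreover have "attr_deriv G I {m} \<subseteq> G" unfolding attr_deriv_def by blast
  moreover have "obj_deriv M I (attr_deriv G I {m}) \<subseteq> M" unfolding obj_deriv_def by blast
  ultimately show ?thesis unfolding concepts_def by simp
qed

lemma split_diff:
  assumes "S \<subseteq> C" "Y \<subseteq> (\<Union>c\<in>C. f c)" "(\<Union>c\<in>C. f c) \<subseteq> Y"
  shows "Y - ((\<Union>c\<in>S. f c) - (\<Union>c\<in>C - S. f c)) = (\<Union>c\<in>C - S. f c)"
proof -
  have "(\<Union>c\<in>C. f c) = (\<Union>c\<in>S. f c) \<union> (\<Union>c\<in>C - S. f c)"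
    using assms(1) by blast
  then have "Y = (\<Union>c\<in>S. f c) \<union> (\<Union>c\<in>C - S. f c)" using assms(2,3) by (metis subset_antisym)
  then show ?thesis by blast
qed

theorem lemma1:
  fixes G :: "'g set" and M :: "'m set" and I :: "('g \<times> 'm) set"
    and S :: "('g set \<times> 'm set) set"
  assumes "formal_context G M I"
    and "finite G" and "finite M"
    and "S \<subseteq> concepts G M I"
  shows "removed_incidences G M I S = (\<Union>(A, B)\<in>concepts G M I - S. A \<times> B) \<and>
         removed_objects G M I S = (\<Union>(A, B)\<in>concepts G M I - S. A) \<and>
         removed_attributes G M I S = (\<Union>(A, B)\<in>concepts G M I - S. B)"
proof -
  let ?C = "concepts G M I"
  have I1: "I \<subseteq> (\<Union>(A, B)\<in>?C. A \<times> B)"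
  proof
    fix p assume p: "p \<in> I"
    obtain g m where pg: "p = (g, m)" by (cases p)
    with p assms(1) have g: "g \<in> G" and m: "m \<in> M" unfolding formal_context_def by auto
    have "m \<in> obj_deriv M I {g}" using p pg m unfolding obj_deriv_def by simp
    then have "p \<in> (\<lambda>(A, B). A \<times> B) (attr_deriv G I (obj_deriv M I {g}), obj_deriv M I {g})"
      using obj_in[OF g] pg by simp
    then show "p \<in> (\<Union>(A, B)\<in>?C. A \<times> B)" using obj_conc[OF g] by blast
  qed
  have I2: "(\<Union>(A, B)\<in>?C. A \<times> B) \<subseteq> I"
  proof
    fix p assume "p \<in> (\<Union>(A, B)\<in>?C. A \<times> B)"
    then obtain A B where "(A, B) \<in> ?C" "p \<in> A \<times> B" by blast
    then show "p \<in> I" using conc_sub by blast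
  qed
  have G1: "G \<subseteq> (\<Union>(A, B)\<in>?C. A)"
  proof
    fix g assume g: "g \<in> G"
    show "g \<in> (\<Union>(A, B)\<in>?C. A)" using obj_conc[OF g] obj_in[OF g] by force
  qed
  have G2: "(\<Union>(A, B)\<in>?C. A) \<subseteq> G"
  proof
    fix g assume "g \<in> (\<Union>(A, B)\<in>?C. A)"
    then obtain A B where "(A, B) \<in> ?C" "g \<in> A" by blast
    then show "g \<in> G" using conc_D(1) by blast
  qed
  have M1: "M \<subseteq> (\<Union>(A, B)\<in>?C. B)"
  proof
    fix m assume m: "m \<in> M"
    show "m \<in> (\<Union>(A, B)\<in>?C. B)" using attr_conc[OF m] attr_in[OF m] by force
  qed
  have M2: "(\<Union>(A, B)\<in>?C. B) \<subseteq> M"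
  proof
    fix m assume "m \<in> (\<Union>(A, B)\<in>?C. B)"
    then obtain A B where "(A, B) \<in> ?C" "m \<in> B" by blast
    then show "m \<in> M" using conc_D(2) by blast
  qed
  have R1: "removed_incidences G M I S = (\<Union>(A, B)\<in>?C - S. A \<times> B)"
    unfolding removed_incidences_def by (rule split_diff[OF assms(4) I1 I2])
  have R2: "removed_objects G M I S = (\<Union>(A, B)\<in>?C - S. A)"
    unfolding removed_objects_def by (rule split_diff[OF assms(4) G1 G2])
  have R3: "removed_attributes G M I S = (\<Union>(A, B)\<in>?C - S. B)"
    unfolding removed_attributes_def by (rule split_diff[OF assms(4) M1 M2])
  show ?thesis using R1 R2 R3 by simp
qed

end
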